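(* Let $r_1<\dots<r_N$ be distinct points of $I$ and let $\mathcal Q_N=\{x\in\mathbb R^N:x_i\ge0,\ \sum_ix_i=1\}$. Let $\sigma:\mathcal P\to\mathrm{HS}(G,H^* )$ be Lipschitz, i.e. there is $K>0$ with $\|\sigma(\mu)-\sigma(\nu)\|_{\mathrm{HS}}\le K\|\mu-\nu\|_{H^*}$ for all $\mu,\nu\in\mathcal P$, and suppose there is a function $g:\mathcal P\times I\to G$ with $\sigma(\mu)(dr)=g(\mu,r)\mu(dr)$ for all $\mu\in\mathcal P$ (i.e. $\sigma(\mu)h$ is the signed measure $\langle g(\mu,r),h\rangle_G\mu(dr)$ for $h\in G$). For $x\in\mathcal Q_N$ define $\sigma_i(x)=g\big(\sum_jx_j\delta_{r_j},r_i\big)x_i\in G$, so that $\sigma\big(\sum_ix_i\delta_{r_i}\big)=\sum_i\sigma_i(x)\delta_{r_i}$. Then the functions $\sigma_i:\mathcal Q_N\to G$ are Lipschitz.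
   Context: Let $a,b\ge0$ and $I=[-a,b]$. $H$ is the space of absolutely continuous $\varphi:I\to\mathbb R$ with $\|\varphi\|_H^2=\varphi(0)^2+\int_I\varphi'(r)^2dr<\infty$; $H^*$ is the completion of the finite signed Borel measures on $I$ under $\|\mu\|_{H^*}=\sup\{\int\varphi\,d\mu:\varphi\in H,\|\varphi\|_H=1\}$ (the dual of $H$); $\mathcal P\subset H^*$ is the set of Borel probability measures on $I$; $\delta_r$ is the Dirac mass at $r$. $G$ is a real separable Hilbert space and $\mathrm{HS}(G,H^* )$ the Hilbert–Schmidt operators $G\to H^*$ with norm $\|A\|_{\mathrm{HS}}^2=\sum_n\|Ae_n\|^2_{H^*}$ for an orthonormal basis $(e_n)$ of $G$. For $z_1,\dots,z_N\in G$, $\sum_iz_i\delta_{r_i}$ denotes the operator $h\mapsto\sum_i\langle z_i,h\rangle_G\delta_{r_i}$ in $\mathrm{HS}(G,H^* )$. *)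

theory Defs
  imports "HOL-Probability.Probability"
begin

abbreviation Ival :: "real \<Rightarrow> real \<Rightarrow> real set" where
  "Ival a b \<equiv> {-a..b}"

text \<open>Unit sphere of H: absolutely continuous phi on I (written as
  phi r = phi 0 + integral from 0 to r of its a.e. derivative psi, psi in L2(I))
  with phi(0)^2 + int_I psi^2 = 1.\<close>
definition H_unit :: "real \<Rightarrow> real \<Rightarrow> (real \<Rightarrow> real) set" where
  "H_unit a b = {\<phi>. \<exists>\<psi>. set_borel_measurable lborel (Ival a b) \<psi>
      \<and> set_integrable lborel (Ival a b) (\<lambda>s. (\<psi> s)\<^sup>2)
      \<and> (\<forall>r\<in>Ival a b. \<phi> r = \<phi> 0 + (LBINT s=0..r. \<psi> s))
      \<and> (\<phi> 0)\<^sup>2 + (LINT s:Ival a b|lborel. (\<psi> s)\<^sup>2) = 1}"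

definition dual_norm :: "real \<Rightarrow> real \<Rightarrow> ((real \<Rightarrow> real) \<Rightarrow> real) \<Rightarrow> real" where
  "dual_norm a b L = Sup {L \<phi> | \<phi>. \<phi> \<in> H_unit a b}"

definition prob_measures :: "real \<Rightarrow> real \<Rightarrow> real measure set" where
  "prob_measures a b = {M. prob_space M \<and> sets M = sets (restrict_space borel (Ival a b))}"

definition sigma_fun :: "(real measure \<Rightarrow> real \<Rightarrow> 'g::real_inner) \<Rightarrow> real measure \<Rightarrow> 'g
    \<Rightarrow> (real \<Rightarrow> real) \<Rightarrow> real" where
  "sigma_fun g M h = (\<lambda>\<phi>. LINT r|M. \<phi> r * (g M r \<bullet> h))"

definition HS_dist :: "real \<Rightarrow> real \<Rightarrow> 'g::real_inner set \<Rightarrow> (real measure \<Rightarrow> real \<Rightarrow> 'g)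
    \<Rightarrow> real measure \<Rightarrow> real measure \<Rightarrow> real" where
  "HS_dist a b B g M N = sqrt (\<Sum>\<^sub>\<infinity>e\<in>B.
      (dual_norm a b (\<lambda>\<phi>. sigma_fun g M e \<phi> - sigma_fun g N e \<phi>))\<^sup>2)"

definition meas_dist :: "real \<Rightarrow> real \<Rightarrow> real measure \<Rightarrow> real measure \<Rightarrow> real" where
  "meas_dist a b M N = dual_norm a b (\<lambda>\<phi>. (LINT r|M. \<phi> r) - (LINT r|N. \<phi> r))"

definition dirac_comb :: "real \<Rightarrow> real \<Rightarrow> ('n::finite \<Rightarrow> real) \<Rightarrow> real^'n \<Rightarrow> real measure" where
  "dirac_comb a b r x = measure_of (Ival a b) (sets (restrict_space borel (Ival a b)))
      (\<lambda>A. \<Sum>j\<in>UNIV. ennreal (x $ j) * indicator A (r j))"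

definition simplex_Q :: "(real^'n::finite) set" where
  "simplex_Q = {x. (\<forall>i. 0 \<le> x $ i) \<and> (\<Sum>i\<in>UNIV. x $ i) = 1}"

end

theory Submission
  imports Defs "HOL-Computational_Algebra.Polynomial"
begin


definition DC :: "real \<Rightarrow> real \<Rightarrow> ('n::finite \<Rightarrow> real) \<Rightarrow> real^'n \<Rightarrow> real measure" where
  "DC a b r x = distr (density (count_space UNIV) (\<lambda>j. ennreal (x $ j))) (restrict_space borel (Ival a b)) r"

lemma r_meas: "(\<And>j. r j \<in> Ival a b) \<Longrightarrow> r \<in> measurable (count_space UNIV) (restrict_space borel (Ival a b))"
  by (auto simp: measurable_def space_restrict_space)

lemma emeasure_DC:
  assumes r: "\<And>j. r j \<in> Ival a b" and A: "A \<in> sets (restrict_space borel (Ival a b))"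
  shows "emeasure (DC a b r x) A = (\<Sum>j\<in>UNIV. ennreal (x $ j) * indicator A (r j))"
proof -
  have "emeasure (DC a b r x) A = emeasure (density (count_space UNIV) (\<lambda>j. ennreal (x $ j))) (r -` A)"
    unfolding DC_def by (subst emeasure_distr[OF _ A]) (use r_meas[OF r] in simp_all)
  also have "\<dots> = (\<integral>\<^sup>+ j. ennreal (x $ j) * indicator (r -` A) j \<partial>count_space UNIV)"
    by (subst emeasure_density) auto
  also have "\<dots> = (\<Sum>j\<in>UNIV. ennreal (x $ j) * indicator A (r j))"
    by (subst nn_integral_count_space_finite) (auto simp: indicator_def)
  finally show ?thesis .
qed

lemma dirac_comb_DC:
  assumes r: "\<And>j. r j \<in> Ival a b"
  shows "dirac_comb a b r x = DC a b r x"
proof -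
  have sa: "sigma_algebra (Ival a b) (sets (restrict_space borel (Ival a b)))"
    using sets.sigma_algebra_axioms[of "restrict_space borel (Ival a b)"]
    by (simp add: space_restrict_space)
  have "DC a b r x = measure_of (space (DC a b r x)) (sets (DC a b r x)) (emeasure (DC a b r x))"
    by (simp add: measure_of_of_measure)
  also have "\<dots> = measure_of (Ival a b) (sets (restrict_space borel (Ival a b))) (emeasure (DC a b r x))"
    by (simp add: DC_def space_restrict_space)
  also have "\<dots> = dirac_comb a b r x"
    unfolding dirac_comb_def
    apply (rule measure_of_eq)
    using sets.space_closed[of "restrict_space borel (Ival a b)"] apply (simp add: space_restrict_space)
    using sa by (simp add: sigma_algebra.sigma_sets_eq emeasure_DC[OF r])
  finally show ?thesis by simp
qed

lemma sets_DC: "sets (DC a b r x) = sets (restrict_space borel (Ival a b))"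
  by (simp add: DC_def)

lemma space_DC: "space (DC a b r x) = Ival a b"
  by (simp add: DC_def space_restrict_space)

lemma DC_prob:
  assumes r: "\<And>j. r j \<in> Ival a b" and x: "x \<in> simplex_Q"
  shows "DC a b r x \<in> prob_measures a b"
proof -
  have "Ival a b \<in> sets (restrict_space borel (Ival a b))"
    using sets.top[of "restrict_space borel (Ival a b)"] by (simp add: space_restrict_space)
  then have "emeasure (DC a b r x) (space (DC a b r x)) = (\<Sum>j\<in>UNIV. ennreal (x $ j))"
    using r by (simp add: emeasure_DC space_DC)
  also have "\<dots> = ennreal (\<Sum>j\<in>UNIV. x $ j)"
    using x by (subst sum_ennreal) (auto simp: simplex_Q_def)
  also have "\<dots> = 1" using x by (simp add: simplex_Q_def)
  finally show ?thesis
    by (auto simp: prob_measures_def sets_DC intro!: prob_spaceI)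
qed

lemma integral_DC:
  assumes r: "\<And>j. r j \<in> Ival a b" and x: "\<And>j. 0 \<le> x $ j"
    and f: "f \<in> borel_measurable (restrict_space borel (Ival a b))"
  shows "(LINT t|DC a b r x. f t) = (\<Sum>j\<in>UNIV. x $ j * f (r j))"
proof -
  have "(LINT t|DC a b r x. f t) = (LINT j|density (count_space UNIV) (\<lambda>j. ennreal (x $ j)). f (r j))"
    unfolding DC_def by (rule integral_distr[OF _ f]) (use r_meas[OF r] in simp)
  also have "\<dots> = (LINT j|count_space UNIV. x $ j *\<^sub>R f (r j))"
    by (rule integral_density) (auto simp: x)
  also have "\<dots> = (\<Sum>j\<in>UNIV. x $ j * f (r j))"
    by (simp add: lebesgue_integral_count_space_finite)
  finally show ?thesis .
qed

lemma integral_DC_bound: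
  assumes r: "\<And>j. r j \<in> Ival a b" and x: "\<And>j. 0 \<le> x $ j"
  shows "\<bar>LINT t|DC a b r x. f t\<bar> \<le> (\<Sum>j\<in>UNIV. x $ j * \<bar>f (r j)\<bar>)"
proof (cases "f \<in> borel_measurable (restrict_space borel (Ival a b))")
  case True
  have "\<bar>\<Sum>j\<in>UNIV. x $ j * f (r j)\<bar> \<le> (\<Sum>j\<in>UNIV. \<bar>x $ j * f (r j)\<bar>)" by (rule sum_abs)
  also have "\<dots> = (\<Sum>j\<in>UNIV. x $ j * \<bar>f (r j)\<bar>)" by (rule sum.cong) (simp_all add: abs_mult x)
  finally show ?thesis using integral_DC[where r=r, OF r x True] by simp
next
  case False
  have "\<not> integrable (DC a b r x) f"
  proof
    assume "integrable (DC a b r x) f"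
    then have "f \<in> borel_measurable (DC a b r x)" by (rule borel_measurable_integrable)
    then show False using False by (simp only: measurable_cong_sets[OF sets_DC[of a b r x] refl])
  qed
  then show ?thesis by (simp add: not_integrable_integral_eq x sum_nonneg)
qed

lemma integral_DC_diff:
  assumes r: "\<And>j. r j \<in> Ival a b" and x: "\<And>j. 0 \<le> x $ j" and y: "\<And>j. 0 \<le> y $ j"
  and C: "\<And>j. \<bar>f (r j)\<bar> \<le> C"
  shows "(LINT t|DC a b r x. f t) - (LINT t|DC a b r y. f t) \<le> C * (\<Sum>j\<in>UNIV. \<bar>x $ j - y $ j\<bar>)"
proof (cases "f \<in> borel_measurable (restrict_space borel (Ival a b))")
  case True
  have "(LINT t|DC a b r x. f t) - (LINT t|DC a b r y. f t) = (\<Sum>j\<in>UNIV. (x $ j - y $ j) * f (r j))"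
    using integral_DC[where r=r, OF r x True] integral_DC[where r=r, OF r y True]
    by (simp add: sum_subtractf[symmetric] left_diff_distrib)
  also have "\<dots> \<le> (\<Sum>j\<in>UNIV. \<bar>x $ j - y $ j\<bar> * C)"
  proof (rule sum_mono)
    fix j
    have "(x $ j - y $ j) * f (r j) \<le> \<bar>(x $ j - y $ j) * f (r j)\<bar>" by (rule abs_ge_self)
    also have "\<dots> = \<bar>x $ j - y $ j\<bar> * \<bar>f (r j)\<bar>" by (rule abs_mult)
    also have "\<dots> \<le> \<bar>x $ j - y $ j\<bar> * C" by (rule mult_left_mono[OF C]) simp
    finally show "(x $ j - y $ j) * f (r j) \<le> \<bar>x $ j - y $ j\<bar> * C" .
  qed
  also have "\<dots> = C * (\<Sum>j\<in>UNIV. \<bar>x $ j - y $ j\<bar>)" by (simp add: sum_distrib_left mult.commute)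
  finally show ?thesis .
next
  case False
  have "\<not> integrable (DC a b r x) f" for x
  proof
    assume "integrable (DC a b r x) f"
    then have "f \<in> borel_measurable (DC a b r x)" by (rule borel_measurable_integrable)
    then show False using False by (simp only: measurable_cong_sets[OF sets_DC[of a b r x] refl])
  qed
  moreover have "0 \<le> C" using C[of undefined] by simp
  ultimately show ?thesis by (simp add: not_integrable_integral_eq sum_nonneg)
qed



lemma set_int_bound:
  fixes \<psi> :: "real \<Rightarrow> real"
  assumes sq: "set_integrable lborel (Ival a b) (\<lambda>s. (\<psi> s)\<^sup>2)" and ab: "0 \<le> a" "0 \<le> b"
    and A: "A \<subseteq> Ival a b" and e: "0 < e"
  shows "\<bar>LINT s:A|lborel. \<psi> s\<bar> \<le> (e * (a + b) + (LINT s:Ival a b|lborel. (\<psi> s)\<^sup>2) / e) / 2"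
proof -
  let ?I = "Ival a b"
  have iI: "integrable lborel (indicator ?I :: real \<Rightarrow> real)"
    using ab by (simp add: integrable_indicator_iff)
  have i2: "integrable lborel (\<lambda>s. indicator ?I s * (\<psi> s)\<^sup>2)"
    using sq by (simp add: set_integrable_def)
  define h where "h s = (e / 2) * indicator ?I s + (indicator ?I s * (\<psi> s)\<^sup>2) / (2 * e)" for s
  have ih: "integrable lborel h" unfolding h_def using iI i2 by auto
  have "\<bar>LINT s:A|lborel. \<psi> s\<bar> = \<bar>LINT s|lborel. indicator A s * \<psi> s\<bar>"
    by (simp add: set_lebesgue_integral_def)
  also have "\<dots> \<le> (LINT s|lborel. norm (indicator A s * \<psi> s))"
    using integral_norm_bound[of lborel "\<lambda>s. indicator A s * \<psi> s"] by simp
  also have "\<dots> \<le> (LINT s|lborel. h s)"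
  proof (rule integral_mono'[OF ih])
    fix s :: real
    have k: "\<bar>\<psi> s\<bar> \<le> e / 2 + (\<psi> s)\<^sup>2 / (2 * e)"
    proof -
      have "0 \<le> (\<bar>\<psi> s\<bar> - e)\<^sup>2" by simp
      then have "2 * e * \<bar>\<psi> s\<bar> \<le> e * e + (\<psi> s)\<^sup>2"
        by (simp add: power2_eq_square algebra_simps)
      then show ?thesis using e by (simp add: field_simps power2_eq_square)
    qed
    show "norm (indicator A s * \<psi> s) \<le> h s"
      using A k e by (auto simp: h_def indicator_def)
    show "0 \<le> h s" using e by (auto simp: h_def indicator_def)
  qed
  also have "(LINT s|lborel. h s) = (e / 2) * measure lborel ?I + (LINT s:?I|lborel. (\<psi> s)\<^sup>2) / (2 * e)"
    unfolding h_def using iI i2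
    by (simp add: set_lebesgue_integral_def)
  also have "measure lborel ?I = a + b" using ab by simp
  finally show ?thesis using e by (simp add: field_simps)
qed

lemma interval_int_bound:
  fixes \<psi> :: "real \<Rightarrow> real"
  assumes sq: "set_integrable lborel (Ival a b) (\<lambda>s. (\<psi> s)\<^sup>2)" and ab: "0 \<le> a" "0 \<le> b"
    and t: "t \<in> Ival a b" and e: "0 < e"
  shows "\<bar>LBINT s=0..t. \<psi> s\<bar> \<le> (e * (a + b) + (LINT s:Ival a b|lborel. (\<psi> s)\<^sup>2) / e) / 2"
proof (cases "0 \<le> t")
  case True
  then have "(LBINT s=0..t. \<psi> s) = (LINT s:{0<..<t}|lborel. \<psi> s)"
    by (simp add: interval_lebesgue_integral_def zero_ereal_def)
  moreover have "{0<..<t} \<subseteq> Ival a b" using t ab by auto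
  ultimately show ?thesis using set_int_bound[OF sq ab _ e, of "{0<..<t}"] by auto
next
  case False
  then have "(LBINT s=0..t. \<psi> s) = - (LINT s:{t<..<0}|lborel. \<psi> s)"
    by (simp add: interval_lebesgue_integral_def zero_ereal_def)
  moreover have "{t<..<0} \<subseteq> Ival a b" using t ab by auto
  ultimately show ?thesis using set_int_bound[OF sq ab _ e, of "{t<..<0}"] by auto
qed

definition C0 :: "real \<Rightarrow> real \<Rightarrow> real" where "C0 a b = 1 + (a + b + 1) / 2"

lemma H_unit_bound:
  assumes "\<phi> \<in> H_unit a b" "0 \<le> a" "0 \<le> b" "t \<in> Ival a b"
  shows "\<bar>\<phi> t\<bar> \<le> C0 a b"
proof -
  obtain \<psi> where m: "set_integrable lborel (Ival a b) (\<lambda>s. (\<psi> s)\<^sup>2)"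
      and eq: "\<forall>r\<in>Ival a b. \<phi> r = \<phi> 0 + (LBINT s=0..r. \<psi> s)"
      and n: "(\<phi> 0)\<^sup>2 + (LINT s:Ival a b|lborel. (\<psi> s)\<^sup>2) = 1"
    using assms(1) unfolding H_unit_def by blast
  have S0: "0 \<le> (LINT s:Ival a b|lborel. (\<psi> s)\<^sup>2)"
    unfolding set_lebesgue_integral_def by (intro integral_nonneg_AE) (auto simp: indicator_def)
  have p0: "\<bar>\<phi> 0\<bar> \<le> 1"
  proof -
    have "(\<phi> 0)\<^sup>2 \<le> 1" using n S0 by linarith
    then show ?thesis by (metis abs_le_square_iff abs_one one_power2)
  qed
  have "\<bar>LBINT s=0..t. \<psi> s\<bar> \<le> (1 * (a + b) + (LINT s:Ival a b|lborel. (\<psi> s)\<^sup>2) / 1) / 2"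
    by (rule interval_int_bound[OF m assms(2,3,4)]) simp
  also have "\<dots> \<le> (a + b + 1) / 2"
  proof -
    have "(LINT s:Ival a b|lborel. (\<psi> s)\<^sup>2) \<le> 1" using n zero_le_power2[of "\<phi> 0"] by linarith
    then show ?thesis by simp
  qed
  finally have "\<bar>LBINT s=0..t. \<psi> s\<bar> \<le> (a + b + 1) / 2" .
  moreover have "\<phi> t = \<phi> 0 + (LBINT s=0..t. \<psi> s)" using eq assms(4) by blast
  ultimately show ?thesis using p0 unfolding C0_def by linarith
qed



lemma test_fun:
  fixes r :: "'n::finite \<Rightarrow> real"
  assumes ab: "0 \<le> a" "0 \<le> b" and r_inj: "inj r" and r_in: "\<And>j. r j \<in> Ival a b"
  shows "\<exists>\<phi>. \<phi> \<in> H_unit a b \<and> (\<lambda>t. - \<phi> t) \<in> H_unit a b \<and> continuous_on UNIV \<phi>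
     \<and> \<phi> (r i) \<noteq> 0 \<and> (\<forall>j. j \<noteq> i \<longrightarrow> \<phi> (r j) = 0)"
proof -
  define p :: "real poly" where "p = (\<Prod>j\<in>UNIV-{i}. [:- r j, 1:])"
  have pp: "poly p t = (\<Prod>j\<in>UNIV-{i}. t - r j)" for t
    by (simp add: p_def poly_prod)
  define \<psi> where "\<psi> = poly (pderiv p)"
  have ftc: "(LBINT s=0..t. \<psi> s) = poly p t - poly p 0" for t
  proof -
    have "(LBINT s=ereal 0..ereal t. \<psi> s) = poly p t - poly p 0"
      unfolding \<psi>_def
      apply (rule interval_integral_FTC_finite)
      apply (intro continuous_intros)
      by (metis has_field_derivative_at_within has_real_derivative_iff_has_vector_derivative poly_DERIV)
    then show ?thesis by (simp add: zero_ereal_def)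
  qed
  have cpsi: "continuous_on UNIV \<psi>" unfolding \<psi>_def by (intro continuous_intros)
  have sq: "set_integrable lborel (Ival a b) (\<lambda>s. (\<psi> s)\<^sup>2)"
    by (rule borel_integrable_atLeastAtMost', rule continuous_on_power, rule continuous_on_subset[OF cpsi]) simp
  have msq: "set_borel_measurable lborel (Ival a b) \<psi>"
  proof -
    have "\<psi> \<in> borel_measurable borel" using cpsi by (rule borel_measurable_continuous_onI)
    then show ?thesis unfolding set_borel_measurable_def by measurable
  qed
  define S where "S = (LINT s:Ival a b|lborel. (\<psi> s)\<^sup>2)"
  have S0: "0 \<le> S"
    unfolding S_def set_lebesgue_integral_def by (intro integral_nonneg_AE) (auto simp: indicator_def)
  define s where "s = (poly p 0)\<^sup>2 + S"
  have pri: "poly p (r i) \<noteq> 0" using r_inj by (auto simp: pp inj_eq)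
  have s0: "0 < s"
  proof (rule ccontr)
    assume "\<not> 0 < s"
    then have z: "poly p 0 = 0" "S = 0" using S0 unfolding s_def
      by (smt (verit) zero_le_power2 zero_eq_power2)+
    have "\<bar>poly p (r i)\<bar> \<le> e * (a + b) / 2" if "0 < e" for e
      using interval_int_bound[OF sq ab r_in[of i] that] z ftc[of "r i"] unfolding S_def by simp
    note bnd = this
    define x where "x = \<bar>poly p (r i)\<bar>"
    have xp: "0 < x" using pri by (simp add: x_def)
    define e where "e = x / (a + b + 1)"
    have ep: "0 < e" using xp ab by (simp add: e_def)
    have "x \<le> e * (a + b) / 2" using bnd[OF ep] by (simp add: x_def)
    also have "e * (a + b) / 2 < x"
    proof -
      have "e * (a + b) \<le> e * (a + b + 1)" using ep by simp
      also have "\<dots> = x" using ab by (simp add: e_def)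
      finally show ?thesis using xp by simp
    qed
    finally show False by simp
  qed
  define c where "c = sqrt s"
  have c0: "0 < c" using s0 by (simp add: c_def)
  define \<phi> where "\<phi> t = poly p t / c" for t
  have mem: "(\<lambda>t. \<sigma> * \<phi> t) \<in> H_unit a b" if sg: "\<sigma> = 1 \<or> \<sigma> = -1" for \<sigma> :: real
    unfolding H_unit_def
  proof (intro CollectI exI[of _ "\<lambda>t. \<sigma> * \<psi> t / c"] conjI ballI)
    show "set_borel_measurable lborel (Ival a b) (\<lambda>t. \<sigma> * \<psi> t / c)"
    proof -
      have m: "(\<lambda>x. indicator (Ival a b) x *\<^sub>R \<psi> x) \<in> borel_measurable lborel"
        using msq by (simp add: set_borel_measurable_def)
      have "(\<lambda>x. (\<sigma> / c) * (indicator (Ival a b) x *\<^sub>R \<psi> x)) \<in> borel_measurable lborel"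
        using m by (rule borel_measurable_times[OF borel_measurable_const])
      moreover have "(\<lambda>x. indicator (Ival a b) x *\<^sub>R (\<sigma> * \<psi> x / c)) = (\<lambda>x. (\<sigma> / c) * (indicator (Ival a b) x *\<^sub>R \<psi> x))"
        by (auto simp: fun_eq_iff)
      ultimately show ?thesis by (simp add: set_borel_measurable_def)
    qed
    have "integrable lborel (\<lambda>t. (\<sigma>\<^sup>2 / c\<^sup>2) * (indicator (Ival a b) t *\<^sub>R (\<psi> t)\<^sup>2))"
      using sq unfolding set_integrable_def by (rule integrable_mult_right)
    moreover have "(\<lambda>t. (\<sigma>\<^sup>2 / c\<^sup>2) * (indicator (Ival a b) t *\<^sub>R (\<psi> t)\<^sup>2)) = (\<lambda>t. indicator (Ival a b) t *\<^sub>R (\<sigma> * \<psi> t / c)\<^sup>2)"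
      by (auto simp: fun_eq_iff power_divide power_mult_distrib)
    ultimately show "set_integrable lborel (Ival a b) (\<lambda>t. (\<sigma> * \<psi> t / c)\<^sup>2)"
      by (simp add: set_integrable_def)
    fix t assume "t \<in> Ival a b"
    show "\<sigma> * \<phi> t = \<sigma> * \<phi> 0 + (LBINT s=0..t. \<sigma> * \<psi> s / c)"
    proof -
      have "poly p t = poly p 0 + (LBINT s=0..t. \<psi> s)" using ftc[of t] by simp
      then show ?thesis by (simp add: \<phi>_def distrib_left add_divide_distrib)
    qed
  next
    have sg2: "\<sigma>\<^sup>2 = 1" using sg by auto
    have "(LINT t:Ival a b|lborel. (\<sigma> * \<psi> t / c)\<^sup>2) = (LINT t:Ival a b|lborel. (\<psi> t)\<^sup>2 / c\<^sup>2)"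
      by (simp add: power_divide power_mult_distrib sg2)
    also have "\<dots> = S / s" using s0 by (simp add: S_def c_def)
    finally have "(LINT t:Ival a b|lborel. (\<sigma> * \<psi> t / c)\<^sup>2) = S / s" .
    then show "(\<sigma> * \<phi> 0)\<^sup>2 + (LINT t:Ival a b|lborel. (\<sigma> * \<psi> t / c)\<^sup>2) = 1"
    proof -
      have c2: "c\<^sup>2 = s" using s0 by (simp add: c_def)
      have "(\<sigma> * \<phi> 0)\<^sup>2 = (poly p 0)\<^sup>2 / s" by (simp add: \<phi>_def power_mult_distrib power_divide sg2 c2)
      moreover have "(poly p 0)\<^sup>2 / s + S / s = 1" using s0 by (simp add: add_divide_distrib[symmetric] s_def)
      ultimately show ?thesis using \<open>(LINT t:Ival a b|lborel. (\<sigma> * \<psi> t / c)\<^sup>2) = S / s\<close> by simp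
    qed
  qed
  show ?thesis
  proof (intro exI[of _ \<phi>] conjI allI impI)
    show "\<phi> \<in> H_unit a b" using mem[of 1] by simp
    show "(\<lambda>t. - \<phi> t) \<in> H_unit a b" using mem[of "-1"] by simp
    show "continuous_on UNIV \<phi>" unfolding \<phi>_def using c0 by (intro continuous_intros) auto
    show "\<phi> (r i) \<noteq> 0" using pri c0 by (simp add: \<phi>_def)
    fix j assume "j \<noteq> i" then show "\<phi> (r j) = 0"
      by (simp add: \<phi>_def pp) (metis DiffI UNIV_I empty_iff insert_iff diff_self finite)
  qed
qed



lemma inner_onb_sum:
  fixes B :: "'g::real_inner set"
  assumes B_norm: "\<And>e. e \<in> B \<Longrightarrow> norm e = 1" and B_orth: "pairwise orthogonal B"
    and F: "finite F" "F \<subseteq> B" and e': "e' \<in> F"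
  shows "e' \<bullet> (\<Sum>e\<in>F. f e *\<^sub>R e) = f e'"
proof -
  have "e' \<bullet> (\<Sum>e\<in>F. f e *\<^sub>R e) = (\<Sum>e\<in>F. f e * (e' \<bullet> e))"
    by (simp add: inner_sum_right)
  also have "\<dots> = (\<Sum>e\<in>F. if e = e' then f e else 0)"
  proof (rule sum.cong[OF refl])
    fix e assume e: "e \<in> F"
    show "f e * (e' \<bullet> e) = (if e = e' then f e else 0)"
    proof (cases "e = e'")
      case True
      then have "e' \<bullet> e = 1" using B_norm[of e] e F by (metis norm_eq_1 subsetD)
      then show ?thesis using True by simp
    next
      case False
      have "e' \<in> B" "e \<in> B" using e e' F by auto
      then have "orthogonal e' e" using B_orth False by (metis pairwiseD)
      then have "e' \<bullet> e = 0" by (simp add: orthogonal_def)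
      then show ?thesis using False by simp
    qed
  qed
  also have "\<dots> = f e'" using F e' by (simp add: sum.delta')
  finally show ?thesis .
qed

lemma parseval_approx:
  fixes B :: "'g::real_inner set" and d :: 'g
  assumes B_norm: "\<And>e. e \<in> B \<Longrightarrow> norm e = 1" and B_orth: "pairwise orthogonal B"
    and dense: "closure (span B) = UNIV" and eps: "0 < \<epsilon>"
  shows "\<exists>F. finite F \<and> F \<subseteq> B \<and> (norm d)\<^sup>2 \<le> (\<Sum>e\<in>F. (d \<bullet> e)\<^sup>2) + \<epsilon>"
proof -
  have "d \<in> closure (span B)" using dense by simp
  then obtain v where v: "v \<in> span B" "dist v d < sqrt \<epsilon>"
    using eps unfolding closure_approachable by (meson real_sqrt_gt_zero)
  obtain F c where F: "finite F" "F \<subseteq> B" and vF: "v = (\<Sum>e\<in>F. c e *\<^sub>R e)"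
    using v(1) unfolding span_explicit by blast
  define P where "P = (\<Sum>e\<in>F. (d \<bullet> e) *\<^sub>R e)"
  have Pe: "e' \<bullet> P = d \<bullet> e'" if "e' \<in> F" for e'
    unfolding P_def by (rule inner_onb_sum[OF B_norm B_orth F that])
  have ve: "e' \<bullet> v = c e'" if "e' \<in> F" for e'
    unfolding vF by (rule inner_onb_sum[OF B_norm B_orth F that])
  have orth_gen: "(d - P) \<bullet> (\<Sum>e\<in>F. f e *\<^sub>R e) = 0" for f
  proof -
    have "(d - P) \<bullet> (\<Sum>e\<in>F. f e *\<^sub>R e) = (\<Sum>e\<in>F. f e * ((d - P) \<bullet> e))"
      by (simp add: inner_sum_right)
    also have "\<dots> = 0"
    proof (rule sum.neutral, rule ballI)
      fix e assume e: "e \<in> F"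
      have "(d - P) \<bullet> e = d \<bullet> e - e \<bullet> P" by (simp add: inner_diff_left inner_commute[of P e])
      then show "f e * ((d - P) \<bullet> e) = 0" using Pe[OF e] by simp
    qed
    finally show ?thesis .
  qed
  have PmV: "P - v = (\<Sum>e\<in>F. (d \<bullet> e - c e) *\<^sub>R e)"
    by (simp add: P_def vF scaleR_diff_left sum_subtractf)
  have "(norm (d - v))\<^sup>2 = (norm ((d - P) + (P - v)))\<^sup>2" by simp
  also have "\<dots> = (norm (d - P))\<^sup>2 + (norm (P - v))\<^sup>2"
    by (rule norm_add_Pythagorean) (simp add: orthogonal_def PmV orth_gen)
  finally have h1: "(norm (d - P))\<^sup>2 \<le> (norm (d - v))\<^sup>2" by simp
  have "(norm d)\<^sup>2 = (norm ((d - P) + P))\<^sup>2" by simp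
  also have "\<dots> = (norm (d - P))\<^sup>2 + (norm P)\<^sup>2"
    by (rule norm_add_Pythagorean) (use orth_gen[of "\<lambda>e. d \<bullet> e"] in \<open>simp only: orthogonal_def P_def[symmetric]\<close>)
  also have "(norm P)\<^sup>2 = (\<Sum>e\<in>F. (d \<bullet> e)\<^sup>2)"
  proof -
    have "(norm P)\<^sup>2 = P \<bullet> P" by (simp add: power2_norm_eq_inner)
    also have "\<dots> = (\<Sum>e\<in>F. (d \<bullet> e) * (e \<bullet> P))"
      by (simp add: P_def inner_sum_left)
    also have "\<dots> = (\<Sum>e\<in>F. (d \<bullet> e)\<^sup>2)"
      by (rule sum.cong[OF refl]) (simp add: Pe power2_eq_square)
    finally show ?thesis .
  qed
  finally have h2: "(norm d)\<^sup>2 = (norm (d - P))\<^sup>2 + (\<Sum>e\<in>F. (d \<bullet> e)\<^sup>2)" .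
  have "(norm (d - v))\<^sup>2 \<le> \<epsilon>"
  proof -
    have "norm (d - v) \<le> sqrt \<epsilon>" using v(2) by (simp add: dist_norm norm_minus_commute)
    then have "(norm (d - v))\<^sup>2 \<le> (sqrt \<epsilon>)\<^sup>2" by (intro power_mono) auto
    then show ?thesis using eps by simp
  qed
  then have "(norm d)\<^sup>2 \<le> (\<Sum>e\<in>F. (d \<bullet> e)\<^sup>2) + \<epsilon>" using h1 h2 by linarith
  then show ?thesis using F by blast
qed



lemma neg_H_unit:
  assumes "\<phi> \<in> H_unit a b" shows "(\<lambda>t. - \<phi> t) \<in> H_unit a b"
proof -
  obtain \<psi> where m: "set_borel_measurable lborel (Ival a b) \<psi>"
      and i: "set_integrable lborel (Ival a b) (\<lambda>s. (\<psi> s)\<^sup>2)"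
      and eq: "\<forall>r\<in>Ival a b. \<phi> r = \<phi> 0 + (LBINT s=0..r. \<psi> s)"
      and n: "(\<phi> 0)\<^sup>2 + (LINT s:Ival a b|lborel. (\<psi> s)\<^sup>2) = 1"
    using assms unfolding H_unit_def by blast
  show ?thesis unfolding H_unit_def
  proof (intro CollectI exI[of _ "\<lambda>s. - \<psi> s"] conjI ballI)
    show "set_borel_measurable lborel (Ival a b) (\<lambda>s. - \<psi> s)"
      using m unfolding set_borel_measurable_def by simp
    show "set_integrable lborel (Ival a b) (\<lambda>s. (- \<psi> s)\<^sup>2)" using i by simp
    fix r assume "r \<in> Ival a b"
    then show "- \<phi> r = - \<phi> 0 + (LBINT s=0..r. - \<psi> s)"
      using eq by (simp add: interval_lebesgue_integral_uminus)
  next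
    show "(- \<phi> 0)\<^sup>2 + (LINT s:Ival a b|lborel. (- \<psi> s)\<^sup>2) = 1" using n by simp
  qed
qed

lemma dn_ge:
  "bdd_above {L \<phi> |\<phi>. \<phi> \<in> H_unit a b} \<Longrightarrow> \<phi> \<in> H_unit a b \<Longrightarrow> L \<phi> \<le> dual_norm a b L"
  unfolding dual_norm_def by (rule cSup_upper) auto

lemma dn_le:
  "H_unit a b \<noteq> {} \<Longrightarrow> (\<And>\<phi>. \<phi> \<in> H_unit a b \<Longrightarrow> L \<phi> \<le> M) \<Longrightarrow> dual_norm a b L \<le> M"
  unfolding dual_norm_def by (rule cSup_least) auto

lemma bdd_H:
  "(\<And>\<phi>. \<phi> \<in> H_unit a b \<Longrightarrow> L \<phi> \<le> M) \<Longrightarrow> bdd_above {L \<phi> |\<phi>. \<phi> \<in> H_unit a b}"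
  unfolding bdd_above_def by blast

lemma sig_bound:
  assumes r: "\<And>j. r j \<in> Ival a b" and x: "x \<in> simplex_Q" and ph: "\<phi> \<in> H_unit a b"
    and ab: "0 \<le> a" "0 \<le> b"
  shows "\<bar>LINT t|DC a b r x. \<phi> t * h t\<bar> \<le> C0 a b * (\<Sum>j\<in>UNIV. x $ j * \<bar>h (r j)\<bar>)"
proof -
  have x0: "\<And>j. 0 \<le> x $ j" using x by (simp add: simplex_Q_def)
  have "\<bar>LINT t|DC a b r x. \<phi> t * h t\<bar> \<le> (\<Sum>j\<in>UNIV. x $ j * \<bar>\<phi> (r j) * h (r j)\<bar>)"
    by (rule integral_DC_bound[where r=r, OF r x0])
  also have "\<dots> \<le> (\<Sum>j\<in>UNIV. x $ j * (C0 a b * \<bar>h (r j)\<bar>))"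
  proof (rule sum_mono)
    fix j
    have "\<bar>\<phi> (r j)\<bar> \<le> C0 a b" by (rule H_unit_bound[OF ph ab r])
    then have "\<bar>\<phi> (r j) * h (r j)\<bar> \<le> C0 a b * \<bar>h (r j)\<bar>"
      by (simp add: abs_mult mult_right_mono)
    then show "x $ j * \<bar>\<phi> (r j) * h (r j)\<bar> \<le> x $ j * (C0 a b * \<bar>h (r j)\<bar>)"
      using x0 by (simp add: mult_left_mono)
  qed
  also have "\<dots> = C0 a b * (\<Sum>j\<in>UNIV. x $ j * \<bar>h (r j)\<bar>)"
    by (subst sum_distrib_left) (rule sum.cong; simp)
  finally show ?thesis .
qed

lemma sig_bdd:
  assumes r: "\<And>j. r j \<in> Ival a b" and x: "x \<in> simplex_Q" and ab: "0 \<le> a" "0 \<le> b"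
  shows "\<exists>M. \<forall>\<phi>\<in>H_unit a b. \<bar>LINT t|DC a b r x. \<phi> t * h t\<bar> \<le> M"
  using sig_bound[where r=r, OF r x _ ab] by blast

lemma sum_abs_le_card_norm:
  fixes x y :: "real^'n::finite"
  shows "(\<Sum>j\<in>UNIV. \<bar>x $ j - y $ j\<bar>) \<le> real CARD('n) * dist x y"
proof -
  have "(\<Sum>j\<in>UNIV. \<bar>x $ j - y $ j\<bar>) \<le> (\<Sum>j\<in>(UNIV::'n set). dist x y)"
  proof (rule sum_mono)
    fix j
    have "\<bar>x $ j - y $ j\<bar> = \<bar>(x - y) $ j\<bar>" by simp
    also have "\<dots> \<le> norm (x - y)" by (rule component_le_norm_cart)
    finally show "\<bar>x $ j - y $ j\<bar> \<le> dist x y" by (simp add: dist_norm)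
  qed
  then show ?thesis by simp
qed

lemma C0_pos: "0 \<le> a \<Longrightarrow> 0 \<le> b \<Longrightarrow> 0 < C0 a b"
proof -
  assume "0 \<le> a" "0 \<le> b"
  then have "0 \<le> (a + b + 1) / 2" by (intro divide_nonneg_nonneg) auto
  then show ?thesis unfolding C0_def by linarith
qed



theorem proposition3p10:
  fixes a b K :: real
    and r :: "'n::{finite,linorder} \<Rightarrow> real"
    and B :: "'g::{real_inner,complete_space} set"
    and g :: "real measure \<Rightarrow> real \<Rightarrow> 'g"
  assumes "0 \<le> a" and "0 \<le> b"
    and r_mono: "strict_mono r" and r_in: "\<And>j. r j \<in> Ival a b"
    and B_countable: "countable B"
    and B_norm: "\<And>e. e \<in> B \<Longrightarrow> norm e = 1"
    and B_orth: "pairwise orthogonal B"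
    and B_dense: "closure (span B) = UNIV"
    and g_meas: "\<And>M h. M \<in> prob_measures a b \<Longrightarrow> integrable M (\<lambda>r. g M r \<bullet> h)"
    and sigma_HS: "\<And>M. M \<in> prob_measures a b \<Longrightarrow>
        (\<lambda>e. (dual_norm a b (sigma_fun g M e))\<^sup>2) summable_on B"
    and "K > 0"
    and sigma_lip: "\<And>M N. M \<in> prob_measures a b \<Longrightarrow> N \<in> prob_measures a b \<Longrightarrow>
        HS_dist a b B g M N \<le> K * meas_dist a b M N"
  shows "\<forall>i. \<exists>L. L-lipschitz_on simplex_Q (\<lambda>x. x $ i *\<^sub>R g (dirac_comb a b r x) (r i))"
proof
  fix i
  have ab: "0 \<le> a" "0 \<le> b" by fact+
  have r_inj: "inj r" using r_mono by (rule strict_mono_imp_inj_on)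
  obtain \<phi> where ph: "\<phi> \<in> H_unit a b" and phn: "(\<lambda>t. - \<phi> t) \<in> H_unit a b"
      and phc: "continuous_on UNIV \<phi>" and phi: "\<phi> (r i) \<noteq> 0" and phj: "\<And>j. j \<noteq> i \<Longrightarrow> \<phi> (r j) = 0"
    using test_fun[where r=r, OF ab r_inj r_in, of i] by blast
  define c where "c = \<phi> (r i)"
  have c0: "0 < \<bar>c\<bar>" using phi by (simp add: c_def)
  have Hne: "H_unit a b \<noteq> {}" using ph by blast
  have phm: "\<phi> \<in> borel_measurable (restrict_space borel (Ival a b))"
    using borel_measurable_continuous_onI[OF phc] by (rule measurable_restrict_space1)
  have C0pos: "0 < C0 a b" using ab by (rule C0_pos)
  have sig_eval: "sigma_fun g (DC a b r z) e \<phi> = z $ i * c * (g (DC a b r z) (r i) \<bullet> e)"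
    if z: "z \<in> simplex_Q" for z e
  proof -
    let ?M = "DC a b r z"
    have z0: "\<And>j. 0 \<le> z $ j" using z by (simp add: simplex_Q_def)
    have P: "?M \<in> prob_measures a b" by (rule DC_prob[where r=r, OF r_in z])
    have "(\<lambda>t. g ?M t \<bullet> e) \<in> borel_measurable ?M"
      using g_meas[OF P] by (rule borel_measurable_integrable)
    then have hm: "(\<lambda>t. g ?M t \<bullet> e) \<in> borel_measurable (restrict_space borel (Ival a b))"
      by (simp only: measurable_cong_sets[OF sets_DC[of a b r z] refl])
    have pm: "(\<lambda>t. \<phi> t * (g ?M t \<bullet> e)) \<in> borel_measurable (restrict_space borel (Ival a b))"
      using phm hm by (rule borel_measurable_times)
    have "sigma_fun g ?M e \<phi> = (\<Sum>j\<in>UNIV. z $ j * (\<phi> (r j) * (g ?M (r j) \<bullet> e)))"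
      unfolding sigma_fun_def by (rule integral_DC[where r=r, OF r_in z0 pm])
    also have "\<dots> = (\<Sum>j\<in>UNIV. if j = i then z $ i * (c * (g ?M (r i) \<bullet> e)) else 0)"
      by (rule sum.cong) (auto simp: phj c_def)
    also have "\<dots> = z $ i * c * (g ?M (r i) \<bullet> e)" by simp
    finally show ?thesis .
  qed
  have sig_neg: "sigma_fun g M e (\<lambda>t. - \<psi> t) = - sigma_fun g M e \<psi>" for M e \<psi>
    by (simp add: sigma_fun_def)
  have sig_abs: "\<exists>Bd. \<forall>\<phi>'\<in>H_unit a b. \<bar>sigma_fun g (DC a b r z) e \<phi>'\<bar> \<le> Bd" if z: "z \<in> simplex_Q" for z e
    unfolding sigma_fun_def by (rule sig_bdd[where r=r, OF r_in z ab])
  have sig_bddA: "bdd_above {sigma_fun g (DC a b r z) e \<phi>' |\<phi>'. \<phi>' \<in> H_unit a b}" if z: "z \<in> simplex_Q" for z e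
  proof -
    obtain Bd where "\<forall>\<phi>'\<in>H_unit a b. \<bar>sigma_fun g (DC a b r z) e \<phi>'\<bar> \<le> Bd" using sig_abs[OF z] by blast
    then show ?thesis by (intro bdd_H) (auto simp: abs_le_iff)
  qed
  define L where "L = K * C0 a b * real CARD('n) / \<bar>c\<bar>"
  show "\<exists>L. L-lipschitz_on simplex_Q (\<lambda>x. x $ i *\<^sub>R g (dirac_comb a b r x) (r i))"
  proof (intro exI[of _ L] lipschitz_onI)
    show "0 \<le> L" using \<open>K > 0\<close> C0pos c0 by (simp add: L_def)
    fix x y :: "real^('n::{finite,linorder})" assume x: "x \<in> simplex_Q" and y: "y \<in> simplex_Q"
    define Mx where "Mx = DC a b r x"
    define My where "My = DC a b r y"
    have dcx: "dirac_comb a b r x = Mx" by (simp add: Mx_def dirac_comb_DC[where r=r, OF r_in])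
    have dcy: "dirac_comb a b r y = My" by (simp add: My_def dirac_comb_DC[where r=r, OF r_in])
    have Px: "Mx \<in> prob_measures a b" unfolding Mx_def by (rule DC_prob[where r=r, OF r_in x])
    have Py: "My \<in> prob_measures a b" unfolding My_def by (rule DC_prob[where r=r, OF r_in y])
    have x0: "\<And>j. 0 \<le> x $ j" using x by (simp add: simplex_Q_def)
    have y0: "\<And>j. 0 \<le> y $ j" using y by (simp add: simplex_Q_def)
    define d where "d = x $ i *\<^sub>R g Mx (r i) - y $ i *\<^sub>R g My (r i)"
    have dist_eq: "dist (x $ i *\<^sub>R g (dirac_comb a b r x) (r i)) (y $ i *\<^sub>R g (dirac_comb a b r y) (r i)) = norm d"
      by (simp add: dcx dcy d_def dist_norm)
    define Le where "Le e = (\<lambda>\<phi>'. sigma_fun g Mx e \<phi>' - sigma_fun g My e \<phi>')" for e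
    define dx where "dx e = dual_norm a b (sigma_fun g Mx e)" for e
    define dy where "dy e = dual_norm a b (sigma_fun g My e)" for e
    have bx: "bdd_above {sigma_fun g Mx e \<phi>' |\<phi>'. \<phi>' \<in> H_unit a b}" for e
      unfolding Mx_def by (rule sig_bddA[OF x])
    have by': "bdd_above {sigma_fun g My e \<phi>' |\<phi>'. \<phi>' \<in> H_unit a b}" for e
      unfolding My_def by (rule sig_bddA[OF y])
    have bL: "bdd_above {Le e \<phi>' |\<phi>'. \<phi>' \<in> H_unit a b}" for e
    proof (rule bdd_H)
      fix \<phi>' assume p: "\<phi>' \<in> H_unit a b"
      have "sigma_fun g Mx e \<phi>' \<le> dx e" unfolding dx_def by (rule dn_ge[OF bx p])
      moreover have "sigma_fun g My e (\<lambda>t. - \<phi>' t) \<le> dy e" unfolding dy_def by (rule dn_ge[OF by' neg_H_unit[OF p]])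
      ultimately show "Le e \<phi>' \<le> dx e + dy e" by (simp add: Le_def sig_neg)
    qed
    have upper: "dual_norm a b (Le e) \<le> dx e + dy e" for e
    proof (rule dn_le[OF Hne])
      fix \<phi>' assume p: "\<phi>' \<in> H_unit a b"
      have "sigma_fun g Mx e \<phi>' \<le> dx e" unfolding dx_def by (rule dn_ge[OF bx p])
      moreover have "sigma_fun g My e (\<lambda>t. - \<phi>' t) \<le> dy e" unfolding dy_def by (rule dn_ge[OF by' neg_H_unit[OF p]])
      ultimately show "Le e \<phi>' \<le> dx e + dy e" by (simp add: Le_def sig_neg)
    qed
    have Le_phi: "Le e \<phi> = c * (d \<bullet> e)" for e
    proof -
      have "Le e \<phi> = x $ i * c * (g Mx (r i) \<bullet> e) - y $ i * c * (g My (r i) \<bullet> e)"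
        unfolding Le_def Mx_def My_def using sig_eval[OF x] sig_eval[OF y] by simp
      also have "\<dots> = c * (d \<bullet> e)" by (simp add: d_def inner_diff_left algebra_simps)
      finally show ?thesis .
    qed
    have lowerL: "\<bar>c * (d \<bullet> e)\<bar> \<le> dual_norm a b (Le e)" for e
    proof -
      have "Le e \<phi> \<le> dual_norm a b (Le e)" by (rule dn_ge[OF bL ph])
      moreover have "Le e (\<lambda>t. - \<phi> t) \<le> dual_norm a b (Le e)" by (rule dn_ge[OF bL phn])
      moreover have "Le e (\<lambda>t. - \<phi> t) = - Le e \<phi>" by (simp add: Le_def sig_neg)
      ultimately show ?thesis using Le_phi[of e] by (simp add: abs_le_iff)
    qed
    define T where "T e = (dual_norm a b (Le e))\<^sup>2" for e
    have T0: "0 \<le> T e" for e by (simp add: T_def)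
    have Tlow: "c\<^sup>2 * (d \<bullet> e)\<^sup>2 \<le> T e" for e
    proof -
      have "\<bar>c * (d \<bullet> e)\<bar>\<^sup>2 \<le> (dual_norm a b (Le e))\<^sup>2"
        by (rule power_mono[OF lowerL]) simp
      then show ?thesis by (simp add: T_def power_mult_distrib)
    qed
    have Tsum: "T summable_on B"
    proof (rule summable_on_comparison_test)
      show "(\<lambda>e. 2 * (dx e)\<^sup>2 + 2 * (dy e)\<^sup>2) summable_on B"
        unfolding dx_def dy_def
        by (intro summable_on_add summable_on_cmult_right sigma_HS Px Py)
      fix e assume "e \<in> B"
      show "0 \<le> T e" by (rule T0)
      have DN0: "0 \<le> dual_norm a b (Le e)" using lowerL[of e] by linarith
      have "T e \<le> (dx e + dy e)\<^sup>2" unfolding T_def by (rule power_mono[OF upper DN0])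
      also have "\<dots> \<le> 2 * (dx e)\<^sup>2 + 2 * (dy e)\<^sup>2"
      proof -
        have "0 \<le> (dx e - dy e)\<^sup>2" by simp
        then show ?thesis by (simp add: power2_eq_square algebra_simps)
      qed
      finally show "T e \<le> 2 * (dx e)\<^sup>2 + 2 * (dy e)\<^sup>2" .
    qed
    have HS: "HS_dist a b B g Mx My = sqrt (infsum T B)"
    proof -
      have "T = (\<lambda>e. (dual_norm a b (\<lambda>\<phi>. sigma_fun g Mx e \<phi> - sigma_fun g My e \<phi>))\<^sup>2)"
        by (simp add: fun_eq_iff T_def Le_def)
      then show ?thesis by (simp add: HS_dist_def)
    qed
    have c2: "0 < c\<^sup>2" using c0 by simp
    have key: "c\<^sup>2 * (norm d)\<^sup>2 \<le> infsum T B"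
    proof (rule field_le_epsilon)
      fix \<epsilon> :: real assume eps: "0 < \<epsilon>"
      obtain F where F: "finite F" "F \<subseteq> B" and nF: "(norm d)\<^sup>2 \<le> (\<Sum>e\<in>F. (d \<bullet> e)\<^sup>2) + \<epsilon> / c\<^sup>2"
        using parseval_approx[OF B_norm B_orth B_dense, of "\<epsilon> / c\<^sup>2" d] eps c2 by auto
      have "c\<^sup>2 * (norm d)\<^sup>2 \<le> c\<^sup>2 * ((\<Sum>e\<in>F. (d \<bullet> e)\<^sup>2) + \<epsilon> / c\<^sup>2)"
        using nF c2 by (intro mult_left_mono) auto
      also have "\<dots> = (\<Sum>e\<in>F. c\<^sup>2 * (d \<bullet> e)\<^sup>2) + \<epsilon>"
        using c2 by (simp add: distrib_left sum_distrib_left)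
      also have "(\<Sum>e\<in>F. c\<^sup>2 * (d \<bullet> e)\<^sup>2) \<le> (\<Sum>e\<in>F. T e)"
        by (rule sum_mono) (rule Tlow)
      also have "(\<Sum>e\<in>F. T e) \<le> infsum T B"
        by (rule finite_sum_le_infsum[OF Tsum F]) (rule T0)
      finally show "c\<^sup>2 * (norm d)\<^sup>2 \<le> infsum T B + \<epsilon>" by simp
    qed
    have "\<bar>c\<bar> * norm d = sqrt (c\<^sup>2 * (norm d)\<^sup>2)"
      by (simp add: real_sqrt_mult)
    also have "\<dots> \<le> sqrt (infsum T B)" using key by (rule real_sqrt_le_mono)
    also have "\<dots> = HS_dist a b B g Mx My" by (rule HS[symmetric])
    also have "\<dots> \<le> K * meas_dist a b Mx My" by (rule sigma_lip[OF Px Py])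
    also have "meas_dist a b Mx My \<le> C0 a b * (\<Sum>j\<in>UNIV. \<bar>x $ j - y $ j\<bar>)"
      unfolding meas_dist_def
    proof (rule dn_le[OF Hne])
      fix \<phi>' assume p: "\<phi>' \<in> H_unit a b"
      show "(LINT t|Mx. \<phi>' t) - (LINT t|My. \<phi>' t) \<le> C0 a b * (\<Sum>j\<in>UNIV. \<bar>x $ j - y $ j\<bar>)"
        unfolding Mx_def My_def
        by (rule integral_DC_diff[where r=r and f=\<phi>', OF r_in x0 y0]) (rule H_unit_bound[OF p ab r_in])
    qed
    also have "(\<Sum>j\<in>UNIV. \<bar>x $ j - y $ j\<bar>) \<le> real CARD('n) * dist x y"
      by (rule sum_abs_le_card_norm)
    finally have "\<bar>c\<bar> * norm d \<le> K * (C0 a b * (real CARD('n) * dist x y))"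
      using \<open>K > 0\<close> C0pos by (simp add: mult_left_mono)
    then have "norm d \<le> L * dist x y"
      using c0 by (simp add: L_def field_simps)
    then show "dist (x $ i *\<^sub>R g (dirac_comb a b r x) (r i)) (y $ i *\<^sub>R g (dirac_comb a b r y) (r i)) \<le> L * dist x y"
      using dist_eq by simp
  qed
qed

end
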